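(* $(\mathbb{S},\tau)$ is a corecursive algebra for $M\otimes-\colon\mathsf{SquaMS}\to\mathsf{SquaMS}$; that is, for every coalgebra $\beta\colon B\to M\otimes B$ in $\mathsf{SquaMS}$ there is a unique morphism $\beta^*\colon B\to\mathbb{S}$ with $\beta^*=\tau\circ(M\otimes\beta^* )\circ\beta$.
   Context: Let $M_0=\{(r,s)\in[0,1]^2: r\in\{0,1\}\text{ or } s\in\{0,1\}\}$. A square metric space is a pair $(X,S_X)$ with $X$ a metric space with all distances at most $2$ and $S_X\colon M_0\to X$ injective such that (sq1) for $i\in\{0,1\}$, $r,s\in[0,1]$: $d_X(S_X(i,r),S_X(i,s))=|s-r|$ and $d_X(S_X(r,i),S_X(s,i))=|s-r|$; (sq2) $d_X(S_X(r,s),S_X(t,u))\ge|r-t|+|s-u|$. $\mathsf{SquaMS}$: these objects, with short maps $f$ satisfying $f\circ S_X=S_Y$ as morphisms. Let $N=\{0,1,2\}^2$, $M=N\setminus\{(1,1)\}$, also viewed as points of $\mathbb{R}^2$. For $X$ in $\mathsf{SquaMS}$, $M\otimes X=(M\times X)/\!\sim$, where $\sim$ is generated by $(m,S_X(p))\sim(n,S_X(q))$ whenever $m,n\in M$ differ by exactly $1$ in exactly one coordinate and $(m+p)/3=(n+q)/3$; $m\otimes x$ is the class of $(m,x)$. With $d((a,u),(b,v))=\frac13 d_X(u,v)$ if $a=b$ and $2$ otherwise, $M\otimes X$ gets the quotient metric (infimum over finite chains of sums of consecutive distances, $\sim$-related consecutive pairs counting $0$). $S_{M\otimes X}(p)=m\otimes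 S_X(3p-m)$ for any $m\in M$ with $p\in(m+[0,1]^2)/3$; $(M\otimes f)(m\otimes x)=m\otimes f(x)$. The Sierpinski carpet $\mathbb{S}$ is the unique nonempty compact $K\subseteq[0,1]^2$ with $K=\bigcup_{m\in M}\frac13(m+K)$; it carries the taxicab metric $d((x,y),(x',y'))=|x-x'|+|y-y'|$ and $S_{\mathbb{S}}$ is the inclusion of $M_0\subseteq\mathbb{S}$, making it a square metric space. $\tau\colon M\otimes\mathbb{S}\to\mathbb{S}$ is $\tau(m\otimes s)=\frac13(m+s)$. *)

theory Defs
  imports "HOL-Analysis.Analysis"
begin

definition M0 :: "(real \<times> real) set" where
  "M0 = {(r, s). r \<in> {0..1} \<and> s \<in> {0..1} \<and> (r \<in> {0, 1} \<or> s \<in> {0, 1})}"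

text \<open>A square metric space is given by a carrier X, a metric d and the map S (only its
  values on M0 matter).\<close>
definition square_ms :: "'a set \<Rightarrow> ('a \<Rightarrow> 'a \<Rightarrow> real) \<Rightarrow> (real \<times> real \<Rightarrow> 'a) \<Rightarrow> bool" where
  "square_ms X d S \<longleftrightarrow>
     Metric_space X d \<and>
     (\<forall>x\<in>X. \<forall>y\<in>X. d x y \<le> 2) \<and>
     S ` M0 \<subseteq> X \<and> inj_on S M0 \<and>
     (\<forall>i\<in>{0, 1}. \<forall>r\<in>{0..1}. \<forall>s\<in>{0..1}.
        d (S (i, r)) (S (i, s)) = \<bar>s - r\<bar> \<and> d (S (r, i)) (S (s, i)) = \<bar>s - r\<bar>) \<and>
     (\<forall>p\<in>M0. \<forall>q\<in>M0. d (S p) (S q) \<ge> \<bar>fst p - fst q\<bar> + \<bar>snd p - snd q\<bar>)"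

definition squams_morphism ::
  "'a set \<Rightarrow> ('a \<Rightarrow> 'a \<Rightarrow> real) \<Rightarrow> (real \<times> real \<Rightarrow> 'a) \<Rightarrow>
   'b set \<Rightarrow> ('b \<Rightarrow> 'b \<Rightarrow> real) \<Rightarrow> (real \<times> real \<Rightarrow> 'b) \<Rightarrow> ('a \<Rightarrow> 'b) \<Rightarrow> bool" where
  "squams_morphism X dX SX Y dY SY f \<longleftrightarrow>
     f \<in> X \<rightarrow> Y \<and>
     (\<forall>x\<in>X. \<forall>y\<in>X. dY (f x) (f y) \<le> dX x y) \<and>
     (\<forall>p\<in>M0. f (SX p) = SY p)"

definition Nset :: "(nat \<times> nat) set" where
  "Nset = {0, 1, 2} \<times> {0, 1, 2}"

definition Mset :: "(nat \<times> nat) set" where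
  "Mset = Nset - {(1, 1)}"

definition adjacent :: "nat \<times> nat \<Rightarrow> nat \<times> nat \<Rightarrow> bool" where
  "adjacent m n \<longleftrightarrow>
     (\<bar>int (fst m) - int (fst n)\<bar> = 1 \<and> snd m = snd n) \<or>
     (fst m = fst n \<and> \<bar>int (snd m) - int (snd n)\<bar> = 1)"

definition tensor_gen :: "(real \<times> real \<Rightarrow> 'a) \<Rightarrow> (((nat \<times> nat) \<times> 'a) \<times> ((nat \<times> nat) \<times> 'a)) set" where
  "tensor_gen S = {((m, S p), (n, S q)) | m n p q.
     m \<in> Mset \<and> n \<in> Mset \<and> adjacent m n \<and> p \<in> M0 \<and> q \<in> M0 \<and>
     (real (fst m) + fst p) / 3 = (real (fst n) + fst q) / 3 \<and>
     (real (snd m) + snd p) / 3 = (real (snd n) + snd q) / 3}"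

definition tensor_rel :: "'a set \<Rightarrow> (real \<times> real \<Rightarrow> 'a) \<Rightarrow> (((nat \<times> nat) \<times> 'a) \<times> ((nat \<times> nat) \<times> 'a)) set" where
  "tensor_rel X S = {(a, b). a \<in> Mset \<times> X \<and> b \<in> Mset \<times> X \<and>
     (a, b) \<in> (tensor_gen S \<union> (tensor_gen S)\<inverse>)\<^sup>*}"

definition tensor_carrier :: "'a set \<Rightarrow> (real \<times> real \<Rightarrow> 'a) \<Rightarrow> ((nat \<times> nat) \<times> 'a) set set" where
  "tensor_carrier X S = (Mset \<times> X) // tensor_rel X S"

definition tensor_elem :: "'a set \<Rightarrow> (real \<times> real \<Rightarrow> 'a) \<Rightarrow> nat \<times> nat \<Rightarrow> 'a \<Rightarrow> ((nat \<times> nat) \<times> 'a) set" where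
  "tensor_elem X S m x = tensor_rel X S `` {(m, x)}"

definition base_dist :: "('a \<Rightarrow> 'a \<Rightarrow> real) \<Rightarrow> (nat \<times> nat) \<times> 'a \<Rightarrow> (nat \<times> nat) \<times> 'a \<Rightarrow> real" where
  "base_dist d a b = (if fst a = fst b then d (snd a) (snd b) / 3 else 2)"

definition step_cost :: "'a set \<Rightarrow> ('a \<Rightarrow> 'a \<Rightarrow> real) \<Rightarrow> (real \<times> real \<Rightarrow> 'a) \<Rightarrow>
    (nat \<times> nat) \<times> 'a \<Rightarrow> (nat \<times> nat) \<times> 'a \<Rightarrow> real" where
  "step_cost X d S a b = (if (a, b) \<in> tensor_rel X S then 0 else base_dist d a b)"

definition chain_cost :: "'a set \<Rightarrow> ('a \<Rightarrow> 'a \<Rightarrow> real) \<Rightarrow> (real \<times> real \<Rightarrow> 'a) \<Rightarrow>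
    ((nat \<times> nat) \<times> 'a) list \<Rightarrow> real" where
  "chain_cost X d S xs = sum_list (map2 (step_cost X d S) xs (tl xs))"

definition tensor_dist :: "'a set \<Rightarrow> ('a \<Rightarrow> 'a \<Rightarrow> real) \<Rightarrow> (real \<times> real \<Rightarrow> 'a) \<Rightarrow>
    ((nat \<times> nat) \<times> 'a) set \<Rightarrow> ((nat \<times> nat) \<times> 'a) set \<Rightarrow> real" where
  "tensor_dist X d S A B = Inf {chain_cost X d S xs | xs.
      xs \<noteq> [] \<and> set xs \<subseteq> Mset \<times> X \<and> hd xs \<in> A \<and> last xs \<in> B}"

definition cell :: "nat \<times> nat \<Rightarrow> (real \<times> real) set" where
  "cell m = {(x, y). real (fst m) \<le> 3 * x \<and> 3 * x \<le> real (fst m) + 1 \<and>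
                      real (snd m) \<le> 3 * y \<and> 3 * y \<le> real (snd m) + 1}"

definition tensor_S :: "'a set \<Rightarrow> (real \<times> real \<Rightarrow> 'a) \<Rightarrow> real \<times> real \<Rightarrow> ((nat \<times> nat) \<times> 'a) set" where
  "tensor_S X S p = (let m = (SOME m. m \<in> Mset \<and> p \<in> cell m) in
     tensor_elem X S m (S (3 * fst p - real (fst m), 3 * snd p - real (snd m))))"

definition tensor_map :: "'b set \<Rightarrow> (real \<times> real \<Rightarrow> 'b) \<Rightarrow> ('a \<Rightarrow> 'b) \<Rightarrow>
    ((nat \<times> nat) \<times> 'a) set \<Rightarrow> ((nat \<times> nat) \<times> 'b) set" where
  "tensor_map Y SY f A = (let a = (SOME a. a \<in> A) in tensor_elem Y SY (fst a) (f (snd a)))"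

definition carpet_maps :: "(real \<times> real) set \<Rightarrow> (real \<times> real) set" where
  "carpet_maps K = (\<Union>m\<in>Mset. (\<lambda>k. ((real (fst m) + fst k) / 3, (real (snd m) + snd k) / 3)) ` K)"

definition carpet :: "(real \<times> real) set" where
  "carpet = (THE K. K \<noteq> {} \<and> compact K \<and> K \<subseteq> {0..1} \<times> {0..1} \<and> K = carpet_maps K)"

definition taxicab :: "real \<times> real \<Rightarrow> real \<times> real \<Rightarrow> real" where
  "taxicab p q = \<bar>fst p - fst q\<bar> + \<bar>snd p - snd q\<bar>"

definition carpet_S :: "real \<times> real \<Rightarrow> real \<times> real" where
  "carpet_S p = p"

definition tau :: "((nat \<times> nat) \<times> (real \<times> real)) set \<Rightarrow> real \<times> real" where
  "tau A = (let a = (SOME a. a \<in> A) in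
     ((real (fst (fst a)) + fst (snd a)) / 3, (real (snd (fst a)) + snd (snd a)) / 3))"

end

theory Submission
  imports Defs
begin


definition cv :: "nat \<times> nat \<Rightarrow> real \<times> real \<Rightarrow> real \<times> real" where
  "cv m z = ((real (fst m) + fst z) / 3, (real (snd m) + snd z) / 3)"

abbreviation U :: "(real \<times> real) set" where "U \<equiv> {0..1} \<times> {0..1}"

lemma carpet_maps_cv: "carpet_maps K = (\<Union>m\<in>Mset. cv m ` K)"
  unfolding carpet_maps_def cv_def by simp

lemma Mset_bound: "m \<in> Mset \<Longrightarrow> fst m \<le> 2 \<and> snd m \<le> 2"
  unfolding Mset_def Nset_def by auto

lemma cv_U: "m \<in> Mset \<Longrightarrow> z \<in> U \<Longrightarrow> cv m z \<in> U"
  using Mset_bound[of m] unfolding cv_def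
  by (auto simp: mem_Times_iff)

lemma taxicab_cv: "taxicab (cv m u) (cv m v) = taxicab u v / 3"
  unfolding taxicab_def cv_def by (simp add: abs_div_pos[symmetric] diff_divide_distrib[symmetric]) 

lemma taxicab_U: "u \<in> U \<Longrightarrow> v \<in> U \<Longrightarrow> taxicab u v \<le> 2"
  unfolding taxicab_def by (auto simp: mem_Times_iff abs_if)

lemma taxicab_tri: "taxicab u w \<le> taxicab u v + taxicab v w"
  unfolding taxicab_def by linarith

lemma taxicab_commute: "taxicab u v = taxicab v u"
  unfolding taxicab_def by linarith

lemma taxicab_nonneg: "taxicab u v \<ge> 0"
  unfolding taxicab_def by linarith

lemma taxicab_zero: "taxicab u v \<le> 0 \<Longrightarrow> u = v"
  unfolding taxicab_def by (auto simp: prod_eq_iff)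

lemma dist_le_taxicab: "dist u v \<le> taxicab u v"
proof -
  have "dist u v = sqrt ((fst u - fst v)^2 + (snd u - snd v)^2)"
    by (cases u; cases v) (simp add: dist_Pair_Pair dist_real_def)
  also have "\<dots> \<le> taxicab u v" unfolding taxicab_def by (rule sqrt_sum_squares_le_sum_abs)
  finally show ?thesis .
qed

lemma small_pow: "0 < (e::real) \<Longrightarrow> \<exists>n. 2 / 3^n < e"
proof -
  assume "0 < e"
  then obtain n where "(1/3::real)^n < e/2" using real_arch_pow_inv[of "e/2" "1/3"] by auto
  then show ?thesis by (auto simp: power_one_over field_simps)
qed

lemma approx:
  assumes "A \<subseteq> U" "A \<subseteq> carpet_maps A" "K \<subseteq> U" "K \<noteq> {}" "carpet_maps K \<subseteq> K"
  shows "a \<in> A \<Longrightarrow> \<exists>k\<in>K. taxicab a k \<le> 2 / 3^n"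
proof (induction n arbitrary: a)
  case 0
  then obtain k where "k \<in> K" using assms by auto
  then show ?case using 0 assms taxicab_U by force
next
  case (Suc n)
  then obtain m a1 where m: "m \<in> Mset" "a1 \<in> A" "a = cv m a1"
    using assms(2) unfolding carpet_maps_cv by auto
  then obtain k1 where k1: "k1 \<in> K" "taxicab a1 k1 \<le> 2 / 3^n" using Suc.IH[OF m(2)] by blast
  have "cv m k1 \<in> K" using assms(5) k1 m unfolding carpet_maps_cv by auto
  moreover have "taxicab a (cv m k1) \<le> 2 / 3^Suc n"
    using k1 m by (simp add: taxicab_cv)
  ultimately show ?case by auto
qed

lemma approx_closure:
  assumes "A \<subseteq> U" "A \<subseteq> carpet_maps A" "K \<subseteq> U" "K \<noteq> {}" "carpet_maps K \<subseteq> K"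
  shows "A \<subseteq> closure K"
proof
  fix a assume a: "a \<in> A"
  show "a \<in> closure K"
    unfolding closure_approachable
  proof (intro allI impI)
    fix e :: real assume "e > 0"
    then obtain n where n: "2/3^n < e" using small_pow by auto
    obtain k where "k \<in> K" "taxicab a k \<le> 2/3^n" using approx[OF assms a] by blast
    then show "\<exists>y\<in>K. dist y a < e" using n dist_le_taxicab[of k a] taxicab_commute[of a k] by force
  qed
qed

inductive_set cP :: "(real \<times> real) set" where
  "(0, 0) \<in> cP"
| "p \<in> cP \<Longrightarrow> m \<in> Mset \<Longrightarrow> cv m p \<in> cP"

lemma cP_U: "cP \<subseteq> U"
proof
  fix p assume "p \<in> cP" then show "p \<in> U"
    by induction (auto intro: cv_U)
qed

lemma zero_Mset: "(0,0) \<in> Mset" unfolding Mset_def Nset_def by auto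

lemma cP_fix: "carpet_maps cP = cP"
proof
  show "carpet_maps cP \<subseteq> cP" unfolding carpet_maps_cv by (auto intro: cP.intros)
  have "(0::real,0::real) = cv (0,0) (0,0)" by (simp add: cv_def)
  then have "(0,0) \<in> carpet_maps cP" unfolding carpet_maps_cv using zero_Mset cP.intros(1) by blast
  moreover have "cv m p \<in> carpet_maps cP" if "p \<in> cP" "m \<in> Mset" for m p
    using that unfolding carpet_maps_cv by blast
  ultimately show "cP \<subseteq> carpet_maps cP"
    by (auto elim: cP.cases)
qed

lemma cv_cont: "continuous_on S (cv m)"
  unfolding cv_def by (intro continuous_intros) auto

lemma finite_Mset: "finite Mset" unfolding Mset_def Nset_def by auto

lemma compact_U: "compact U" by (intro compact_Times compact_Icc)

lemma closed_carpet_maps: "compact K \<Longrightarrow> closed (carpet_maps K)"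
  unfolding carpet_maps_cv
  by (intro closed_UN finite_Mset ballI compact_imp_closed compact_continuous_image cv_cont) 

definition carpetP :: "(real \<times> real) set \<Rightarrow> bool" where
  "carpetP K \<longleftrightarrow> K \<noteq> {} \<and> compact K \<and> K \<subseteq> {0..1} \<times> {0..1} \<and> K = carpet_maps K"

lemma carpet_maps_mono: "A \<subseteq> A' \<Longrightarrow> carpet_maps A \<subseteq> carpet_maps A'"
  unfolding carpet_maps_cv by auto

lemma exists_carpet: "carpetP (closure cP)"
proof -
  have cU: "closure cP \<subseteq> U"
    by (intro closure_minimal cP_U closed_Times closed_atLeastAtMost)
  have comp: "compact (closure cP)"
    using compact_U cU by (metis closed_closure compact_Int_closed inf.absorb2)
  have ne: "closure cP \<noteq> {}" using cP.intros(1) closure_subset by blast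
  have 1: "closure cP \<subseteq> carpet_maps (closure cP)"
    using closure_minimal[of cP "carpet_maps (closure cP)"] closed_carpet_maps[OF comp]
      carpet_maps_mono[OF closure_subset[of cP]] cP_fix by auto
  have 2: "cv m ` closure cP \<subseteq> closure cP" if "m \<in> Mset" for m
  proof (rule image_closure_subset[OF cv_cont])
    have "cv m ` cP \<subseteq> cP" using that by (auto intro: cP.intros(2))
    then show "cv m ` cP \<subseteq> closure cP" using closure_subset[of cP] by blast
  qed simp
  have "carpet_maps (closure cP) \<subseteq> closure cP" using 2 unfolding carpet_maps_cv by auto
  with 1 show ?thesis using cU comp ne unfolding carpetP_def by auto
qed

lemma carpet_unique: "carpetP K1 \<Longrightarrow> carpetP K2 \<Longrightarrow> K1 \<subseteq> K2"
  unfolding carpetP_def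
  using approx_closure[of K1 K2] by (metis closure_closed compact_imp_closed order_refl)

lemma carpet_props: "carpetP carpet"
proof -
  have "\<exists>!K. carpetP K" using exists_carpet carpet_unique by (metis subset_antisym)
  then have "carpetP (THE K. carpetP K)" by (rule theI')
  then show ?thesis unfolding carpet_def carpetP_def by simp
qed

lemma carpet_U: "carpet \<subseteq> U" and carpet_fix: "carpet_maps carpet = carpet"
  and carpet_compact: "compact carpet" and carpet_ne: "carpet \<noteq> {}"
  using carpet_props unfolding carpetP_def by auto

lemma cv_carpet: "m \<in> Mset \<Longrightarrow> z \<in> carpet \<Longrightarrow> cv m z \<in> carpet"
  using carpet_fix unfolding carpet_maps_cv by blast

lemma digit: "r \<in> {0..1::real} \<Longrightarrow> \<exists>i::nat. i \<le> 2 \<and> 3 * r - real i \<in> {0..1}"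
proof -
  assume r: "r \<in> {0..1}"
  show ?thesis
  proof (cases "r \<le> 1/3")
    case True then show ?thesis using r by (intro exI[of _ 0]) auto
  next
    case False
    show ?thesis
    proof (cases "r \<le> 2/3")
      case True then show ?thesis using r False by (intro exI[of _ 1]) auto
    next
      case F2: False then show ?thesis using r by (intro exI[of _ 2]) auto
    qed
  qed
qed

lemma M0_decomp: "p \<in> M0 \<Longrightarrow> \<exists>m\<in>Mset. \<exists>q\<in>M0. p = cv m q"
proof -
  assume p: "p \<in> M0"
  obtain r s where rs: "p = (r, s)" by force
  have r: "r \<in> {0..1}" and s: "s \<in> {0..1}" and b: "r \<in> {0,1} \<or> s \<in> {0,1}"
    using p rs unfolding M0_def by auto
  show ?thesis
  proof (cases "s \<in> {0,1}")
    case True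
    obtain i where i: "i \<le> 2" "3 * r - real i \<in> {0..1}" using digit[OF r] by auto
    define j :: nat where "j = (if s = 0 then 0 else 2)"
    have m: "(i, j) \<in> Mset" unfolding Mset_def Nset_def j_def using i by auto
    have q: "(3 * r - real i, 3 * s - real j) \<in> M0" using i True unfolding M0_def j_def by auto
    have "p = cv (i, j) (3 * r - real i, 3 * s - real j)" unfolding cv_def rs by simp
    then show ?thesis using m q by blast
  next
    case False
    then have rb: "r \<in> {0,1}" using b by auto
    obtain i where i: "i \<le> 2" "3 * s - real i \<in> {0..1}" using digit[OF s] by auto
    define j :: nat where "j = (if r = 0 then 0 else 2)"
    have m: "(j, i) \<in> Mset" unfolding Mset_def Nset_def j_def using i by auto
    have q: "(3 * r - real j, 3 * s - real i) \<in> M0" using i rb unfolding M0_def j_def by auto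
    have "p = cv (j, i) (3 * r - real j, 3 * s - real i)" unfolding cv_def rs by simp
    then show ?thesis using m q by blast
  qed
qed

lemma M0_U: "M0 \<subseteq> U" unfolding M0_def by auto

lemma M0_carpet: "M0 \<subseteq> carpet"
proof -
  have "M0 \<subseteq> carpet_maps M0" unfolding carpet_maps_cv using M0_decomp by blast
  then have "M0 \<subseteq> closure carpet"
    using approx_closure[OF M0_U _ carpet_U carpet_ne] carpet_fix by auto
  then show ?thesis using carpet_compact by (simp add: compact_imp_closed)
qed



lemma gen_ex:
  assumes "(y, z) \<in> tensor_gen S"
  shows "\<exists>m n p q. (y, z) = ((m, S p), (n, S q)) \<and> m \<in> Mset \<and> n \<in> Mset \<and> p \<in> M0 \<and> q \<in> M0 \<and>
     (real (fst m) + fst p) / 3 = (real (fst n) + fst q) / 3 \<and>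
     (real (snd m) + snd p) / 3 = (real (snd n) + snd q) / 3"
  using assms unfolding tensor_gen_def by (simp only: mem_Collect_eq) blast

lemma gen_E:
  assumes "(y, z) \<in> tensor_gen S"
  obtains m n p q where "y = (m, S p)" "z = (n, S q)" "m \<in> Mset" "n \<in> Mset" "p \<in> M0" "q \<in> M0"
        "cv m p = cv n q"
proof -
  from gen_ex[OF assms] obtain m n p q where h: "(y, z) = ((m, S p), (n, S q))" "m \<in> Mset" "n \<in> Mset" "p \<in> M0" "q \<in> M0"
     "(real (fst m) + fst p) / 3 = (real (fst n) + fst q) / 3"
     "(real (snd m) + snd p) / 3 = (real (snd n) + snd q) / 3"
    by (elim exE conjE)
  have "cv m p = cv n q" unfolding cv_def using h(6,7) by (simp add: prod_eq_iff)
  moreover have "y = (m, S p)" "z = (n, S q)" using h(1) by simp_all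
  ultimately show ?thesis using that h(2-5) by blast
qed

lemma rel_inv:
  assumes H: "\<And>m n p q. m \<in> Mset \<Longrightarrow> n \<in> Mset \<Longrightarrow> p \<in> M0 \<Longrightarrow> q \<in> M0 \<Longrightarrow> cv m p = cv n q
      \<Longrightarrow> \<Phi> (m, S p) = \<Phi> (n, S q)"
    and ab: "(a, b) \<in> tensor_rel X S"
  shows "\<Phi> a = \<Phi> b"
proof -
  from ab have "(a, b) \<in> (tensor_gen S \<union> (tensor_gen S)\<inverse>)\<^sup>*" unfolding tensor_rel_def by simp
  then show ?thesis
  proof (induction rule: rtrancl_induct)
    case base show ?case by simp
  next
    case (step y z)
    have "\<Phi> y = \<Phi> z"
    proof (cases "(y, z) \<in> tensor_gen S")
      case True
      then obtain m n p q where "y = (m, S p)" "z = (n, S q)" "m \<in> Mset" "n \<in> Mset" "p \<in> M0" "q \<in> M0"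
        "cv m p = cv n q" by (rule gen_E)
      then show ?thesis using H[of m n p q] by simp
    next
      case False
      then have "(z, y) \<in> tensor_gen S" using step.hyps(2) by blast
      then obtain m n p q where "z = (m, S p)" "y = (n, S q)" "m \<in> Mset" "n \<in> Mset" "p \<in> M0" "q \<in> M0"
        "cv m p = cv n q" by (rule gen_E)
      then show ?thesis using H[of m n p q] by simp
    qed
    then show ?case using step.IH by simp
  qed
qed
lemma rel_dom: "(a, b) \<in> tensor_rel X S \<Longrightarrow> a \<in> Mset \<times> X \<and> b \<in> Mset \<times> X"
  unfolding tensor_rel_def by auto

lemma rel_refl: "a \<in> Mset \<times> X \<Longrightarrow> (a, a) \<in> tensor_rel X S"
  unfolding tensor_rel_def by auto

lemma carrier_class: "A \<in> tensor_carrier X S \<Longrightarrow> \<exists>c\<in>Mset \<times> X. A = tensor_rel X S `` {c}"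
  unfolding tensor_carrier_def quotient_def by auto

lemma carrier_some: "A \<in> tensor_carrier X S \<Longrightarrow> (SOME a. a \<in> A) \<in> A"
  using carrier_class[of A X S] rel_refl by (metis Image_singleton_iff someI)

lemma carrier_sub: "A \<in> tensor_carrier X S \<Longrightarrow> A \<subseteq> Mset \<times> X"
  using carrier_class[of A X S] rel_dom by fastforce

lemma cell_M0:
  assumes p: "p \<in> M0" and m: "m \<in> Mset" and c: "p \<in> cell m"
  shows "(3 * fst p - real (fst m), 3 * snd p - real (snd m)) \<in> M0"
    and "cv m (3 * fst p - real (fst m), 3 * snd p - real (snd m)) = p"
proof -
  obtain r s where rs: "p = (r, s)" by force
  have b: "r \<in> {0,1} \<or> s \<in> {0,1}" using p rs unfolding M0_def by auto
  have c1: "real (fst m) \<le> 3 * r" "3 * r \<le> real (fst m) + 1"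
    "real (snd m) \<le> 3 * s" "3 * s \<le> real (snd m) + 1"
    using c rs unfolding cell_def by auto
  have mb: "real (fst m) \<le> 2" "real (snd m) \<le> 2" using Mset_bound[OF m] by auto
  have e1: "r = 0 \<Longrightarrow> 3 * r - real (fst m) = 0" using c1 by auto
  have e2: "r = 1 \<Longrightarrow> 3 * r - real (fst m) = 1" using c1 mb by auto
  have e3: "s = 0 \<Longrightarrow> 3 * s - real (snd m) = 0" using c1 by auto
  have e4: "s = 1 \<Longrightarrow> 3 * s - real (snd m) = 1" using c1 mb by auto
  show "(3 * fst p - real (fst m), 3 * snd p - real (snd m)) \<in> M0"
    unfolding M0_def rs using c1 b e1 e2 e3 e4 by auto
  show "cv m (3 * fst p - real (fst m), 3 * snd p - real (snd m)) = p"
    unfolding cv_def rs by simp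
qed

lemma M0_cell: "p \<in> M0 \<Longrightarrow> \<exists>m. m \<in> Mset \<and> p \<in> cell m"
proof -
  assume "p \<in> M0"
  then obtain m q where "m \<in> Mset" "q \<in> M0" "p = cv m q" using M0_decomp by blast
  moreover have "q \<in> U" using \<open>q \<in> M0\<close> M0_U by auto
  ultimately show ?thesis unfolding cell_def cv_def by (intro exI[of _ m]) (auto simp: mem_Times_iff)
qed

definition mcs :: "('b \<Rightarrow> 'b \<Rightarrow> real) \<Rightarrow> (real \<times> real \<Rightarrow> 'b) \<Rightarrow> (real \<times> real \<Rightarrow> real) \<Rightarrow> 'b \<Rightarrow> real" where
  "mcs d S u x = (INF p\<in>M0. u p + d x (S p))"

definition clamp :: "real \<Rightarrow> real" where "clamp t = max 0 (min 1 t)"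

lemma clamp_lip: "\<bar>clamp s - clamp t\<bar> \<le> \<bar>s - t\<bar>" unfolding clamp_def by auto
lemma clamp_range: "clamp t \<in> {0..1}" unfolding clamp_def by auto
lemma clamp_id: "t \<in> {0..1} \<Longrightarrow> clamp t = t" unfolding clamp_def by auto

definition uu :: "real \<times> real \<Rightarrow> real" where "uu p = fst p + snd p"
definition vv :: "real \<times> real \<Rightarrow> real" where "vv p = fst p - snd p"

lemma zero_M0: "(0,0) \<in> M0" unfolding M0_def by auto

locale setting =
  fixes B :: "'b set" and dB :: "'b \<Rightarrow> 'b \<Rightarrow> real" and SB :: "real \<times> real \<Rightarrow> 'b"
    and \<beta> :: "'b \<Rightarrow> ((nat \<times> nat) \<times> 'b) set"
  assumes sq: "square_ms B dB SB"
    and mor: "squams_morphism B dB SB (tensor_carrier B SB) (tensor_dist B dB SB) (tensor_S B SB) \<beta>"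
begin

lemma sq_parts: "Metric_space B dB" "SB ` M0 \<subseteq> B" "inj_on SB M0"
  "\<forall>p\<in>M0. \<forall>q\<in>M0. dB (SB p) (SB q) \<ge> \<bar>fst p - fst q\<bar> + \<bar>snd p - snd q\<bar>"
  using sq unfolding square_ms_def by blast+
lemma met: "Metric_space B dB" by (rule sq_parts(1))
lemma SB_B: "p \<in> M0 \<Longrightarrow> SB p \<in> B" using sq_parts(2) by blast
lemma SB_inj: "inj_on SB M0" by (rule sq_parts(3))
lemma sq2: "p \<in> M0 \<Longrightarrow> q \<in> M0 \<Longrightarrow> taxicab p q \<le> dB (SB p) (SB q)"
  using sq_parts(4) unfolding taxicab_def by blast
lemma mor_parts: "\<beta> \<in> B \<rightarrow> tensor_carrier B SB"
  "\<forall>x\<in>B. \<forall>y\<in>B. tensor_dist B dB SB (\<beta> x) (\<beta> y) \<le> dB x y"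
  "\<forall>p\<in>M0. \<beta> (SB p) = tensor_S B SB p"
  using mor unfolding squams_morphism_def by blast+
lemma beta_carrier: "x \<in> B \<Longrightarrow> \<beta> x \<in> tensor_carrier B SB"
  using mor_parts(1) by blast
lemma beta_short: "x \<in> B \<Longrightarrow> y \<in> B \<Longrightarrow> tensor_dist B dB SB (\<beta> x) (\<beta> y) \<le> dB x y"
  using mor_parts(2) by blast
lemma beta_S: "p \<in> M0 \<Longrightarrow> \<beta> (SB p) = tensor_S B SB p"
  using mor_parts(3) by blast

lemma d_nonneg: "dB x y \<ge> 0" by (rule Metric_space.nonneg[OF met])
lemma d_commute: "dB x y = dB y x" by (rule Metric_space.commute[OF met])
lemma d_self: "x \<in> B \<Longrightarrow> dB x x = 0" using Metric_space.zero[OF met, of x x] by simp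
lemma d_tri: "x \<in> B \<Longrightarrow> y \<in> B \<Longrightarrow> z \<in> B \<Longrightarrow> dB x z \<le> dB x y + dB y z"
  by (rule Metric_space.triangle[OF met])

definition pick :: "'b \<Rightarrow> (nat \<times> nat) \<times> 'b" where "pick x = (SOME a. a \<in> \<beta> x)"

lemma pick: "x \<in> B \<Longrightarrow> pick x \<in> \<beta> x \<and> fst (pick x) \<in> Mset \<and> snd (pick x) \<in> B"
proof -
  assume x: "x \<in> B"
  have 1: "pick x \<in> \<beta> x" unfolding pick_def by (rule carrier_some[OF beta_carrier[OF x]])
  have "pick x \<in> Mset \<times> B" using 1 carrier_sub[OF beta_carrier[OF x]] by blast
  then show ?thesis using 1 by (simp add: mem_Times_iff)
qed

definition Tm :: "('b \<Rightarrow> real \<times> real) \<Rightarrow> 'b \<Rightarrow> real \<times> real" where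
  "Tm h x = cv (fst (pick x)) (h (snd (pick x)))"

lemma tau_Tm:
  assumes x: "x \<in> B" and h: "\<forall>y\<in>B. h y \<in> carpet"
  shows "tau (tensor_map carpet carpet_S h (\<beta> x)) = Tm h x"
proof -
  define a where "a = pick x"
  have a: "fst a \<in> Mset" "snd a \<in> B" using pick[OF x] a_def by auto
  have tm: "tensor_map carpet carpet_S h (\<beta> x) = tensor_rel carpet carpet_S `` {(fst a, h (snd a))}"
    unfolding tensor_map_def tensor_elem_def a_def pick_def Let_def by simp
  define C where "C = tensor_rel carpet carpet_S `` {(fst a, h (snd a))}"
  have c0: "(fst a, h (snd a)) \<in> C" unfolding C_def using rel_refl[of "(fst a, h (snd a))" carpet carpet_S] a h by (auto simp: mem_Times_iff)
  define b where "b = (SOME b. b \<in> C)"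
  have "b \<in> C" unfolding b_def using c0 by (rule someI)
  then have rel: "((fst a, h (snd a)), b) \<in> tensor_rel carpet carpet_S" unfolding C_def by auto
  have "(\<lambda>b. cv (fst b) (snd b)) (fst a, h (snd a)) = (\<lambda>b. cv (fst b) (snd b)) b"
    by (rule rel_inv[OF _ rel]) (simp add: carpet_S_def)
  moreover have "tau C = cv (fst b) (snd b)" unfolding tau_def b_def Let_def cv_def by simp
  ultimately show ?thesis using tm unfolding C_def Tm_def a_def by simp
qed

definition good :: "('b \<Rightarrow> real \<times> real) \<Rightarrow> bool" where
  "good h \<longleftrightarrow> (\<forall>x\<in>B. h x \<in> U) \<and> (\<forall>p\<in>M0. h (SB p) = p) \<and>
     (\<forall>x\<in>B. \<forall>y\<in>B. taxicab (h x) (h y) \<le> dB x y)"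

lemma F_inv:
  assumes g: "good h" and r: "(a, b) \<in> tensor_rel B SB"
  shows "cv (fst a) (h (snd a)) = cv (fst b) (h (snd b))"
  by (rule rel_inv[OF _ r, where \<Phi> = "\<lambda>a. cv (fst a) (h (snd a))"]) (use g in \<open>auto simp: good_def\<close>)

lemma Tm_class:
  assumes g: "good h" and x: "x \<in> B" and c: "c \<in> \<beta> x"
  shows "Tm h x = cv (fst c) (h (snd c))"
proof -
  obtain c0 where c0: "\<beta> x = tensor_rel B SB `` {c0}" using carrier_class[OF beta_carrier[OF x]] by auto
  have "(c0, pick x) \<in> tensor_rel B SB" "(c0, c) \<in> tensor_rel B SB" using pick[OF x] c c0 by auto
  then show ?thesis unfolding Tm_def using F_inv[OF g] by metis
qed

lemma chain_bound:
  assumes g: "good h"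
  shows "xs \<noteq> [] \<Longrightarrow> set xs \<subseteq> Mset \<times> B \<Longrightarrow>
    taxicab (cv (fst (hd xs)) (h (snd (hd xs)))) (cv (fst (last xs)) (h (snd (last xs)))) \<le> chain_cost B dB SB xs"
proof (induction xs rule: induct_list012)
  case 1 then show ?case by simp
next
  case (2 a) then show ?case by (simp add: chain_cost_def taxicab_def)
next
  case (3 a b zs)
  let ?F = "\<lambda>a. cv (fst a) (h (snd a))"
  have ab: "a \<in> Mset \<times> B" "b \<in> Mset \<times> B" using 3 by auto
  have step: "taxicab (?F a) (?F b) \<le> step_cost B dB SB a b"
  proof (cases "(a, b) \<in> tensor_rel B SB")
    case True
    then show ?thesis using F_inv[OF g True] by (simp add: step_cost_def taxicab_def)
  next
    case False
    show ?thesis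
    proof (cases "fst a = fst b")
      case True
      have "taxicab (?F a) (?F b) = taxicab (h (snd a)) (h (snd b)) / 3" using True by (simp add: taxicab_cv)
      also have "\<dots> \<le> dB (snd a) (snd b) / 3" using g ab unfolding good_def by (auto simp: mem_Times_iff)
      finally show ?thesis using False True by (simp add: step_cost_def base_dist_def)
    next
      case F2: False
      have "?F a \<in> U" "?F b \<in> U" using g ab cv_U unfolding good_def by (auto simp: mem_Times_iff)
      then show ?thesis using False F2 taxicab_U by (simp add: step_cost_def base_dist_def)
    qed
  qed
  have cc: "chain_cost B dB SB (a # b # zs) = step_cost B dB SB a b + chain_cost B dB SB (b # zs)"
    by (simp add: chain_cost_def)
  have "taxicab (?F b) (?F (last (b # zs))) \<le> chain_cost B dB SB (b # zs)" using 3 by auto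
  moreover have "last (a # b # zs) = last (b # zs)" by simp
  moreover have "taxicab (?F a) (?F (last (b # zs))) \<le> taxicab (?F a) (?F b) + taxicab (?F b) (?F (last (b # zs)))"
    by (rule taxicab_tri)
  ultimately show ?case using step cc by simp
qed

lemma Tm_good:
  assumes g: "good h"
  shows "good (Tm h)"
proof -
  have U: "\<forall>x\<in>B. Tm h x \<in> U" using g pick cv_U unfolding good_def Tm_def by auto
  have fixp: "Tm h (SB p) = p" if p: "p \<in> M0" for p
  proof -
    define m0 where "m0 = (SOME m. m \<in> Mset \<and> p \<in> cell m)"
    have m0: "m0 \<in> Mset" "p \<in> cell m0" unfolding m0_def using someI_ex[OF M0_cell[OF p]] by auto
    define q0 where "q0 = (3 * fst p - real (fst m0), 3 * snd p - real (snd m0))"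
    have q0: "q0 \<in> M0" "cv m0 q0 = p" using cell_M0[OF p m0] unfolding q0_def by auto
    have bS: "\<beta> (SB p) = tensor_rel B SB `` {(m0, SB q0)}"
      unfolding beta_S[OF p] tensor_S_def tensor_elem_def Let_def m0_def[symmetric] q0_def by simp
    have "(m0, SB q0) \<in> \<beta> (SB p)" unfolding bS using rel_refl[of "(m0, SB q0)" B SB] m0 q0 SB_B by (auto simp: mem_Times_iff)
    then have "Tm h (SB p) = cv m0 (h (SB q0))" using Tm_class[OF g SB_B[OF p]] by simp
    also have "\<dots> = p" using g q0 unfolding good_def by auto
    finally show ?thesis .
  qed
  have short: "taxicab (Tm h x) (Tm h y) \<le> dB x y" if x: "x \<in> B" and y: "y \<in> B" for x y
  proof -
    let ?S = "{chain_cost B dB SB xs | xs. xs \<noteq> [] \<and> set xs \<subseteq> Mset \<times> B \<and> hd xs \<in> \<beta> x \<and> last xs \<in> \<beta> y}"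
    have ne: "?S \<noteq> {}"
    proof -
      have "[pick x, pick y] \<noteq> [] \<and> set [pick x, pick y] \<subseteq> Mset \<times> B \<and> hd [pick x, pick y] \<in> \<beta> x
        \<and> last [pick x, pick y] \<in> \<beta> y" using pick x y by (auto simp: mem_Times_iff)
      then show ?thesis by blast
    qed
    have lb: "taxicab (Tm h x) (Tm h y) \<le> c" if "c \<in> ?S" for c
    proof -
      obtain xs where xs: "c = chain_cost B dB SB xs" "xs \<noteq> []" "set xs \<subseteq> Mset \<times> B"
        "hd xs \<in> \<beta> x" "last xs \<in> \<beta> y" using \<open>c \<in> ?S\<close> by blast
      have "Tm h x = cv (fst (hd xs)) (h (snd (hd xs)))" using Tm_class[OF g x xs(4)] .
      moreover have "Tm h y = cv (fst (last xs)) (h (snd (last xs)))" using Tm_class[OF g y xs(5)] .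
      ultimately show ?thesis using chain_bound[OF g xs(2,3)] xs(1) by simp
    qed
    have "taxicab (Tm h x) (Tm h y) \<le> Inf ?S" by (rule cInf_greatest[OF ne]) (use lb in blast)
    also have "Inf ?S = tensor_dist B dB SB (\<beta> x) (\<beta> y)" unfolding tensor_dist_def by simp
    also have "\<dots> \<le> dB x y" using beta_short x y .
    finally show ?thesis .
  qed
  show ?thesis unfolding good_def using U fixp short by auto
qed

end



lemma half_bound: "\<bar>a\<bar> \<le> d \<Longrightarrow> \<bar>b\<bar> \<le> d \<Longrightarrow> \<bar>(a + b) / 2\<bar> + \<bar>(a - b) / 2\<bar> \<le> (d::real)"
proof -
  assume "\<bar>a\<bar> \<le> d" "\<bar>b\<bar> \<le> d"
  then have h: "\<bar>a + b\<bar> + \<bar>a - b\<bar> \<le> 2 * d" by arith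
  have "\<bar>(a + b) / 2\<bar> + \<bar>(a - b) / 2\<bar> = (\<bar>a + b\<bar> + \<bar>a - b\<bar>) / 2" by simp
  also have "\<dots> \<le> (2 * d) / 2" using h by (rule divide_right_mono) simp
  finally show ?thesis by simp
qed

context setting
begin

lemma mcs_bdd:
  assumes lb: "\<forall>p\<in>M0. u p \<ge> -1"
  shows "bdd_below ((\<lambda>p. u p + dB x (SB p)) ` M0)"
proof (rule bdd_belowI[of _ "-1"])
  fix y assume "y \<in> (\<lambda>p. u p + dB x (SB p)) ` M0"
  then obtain p where "p \<in> M0" "y = u p + dB x (SB p)" by blast
  then show "-1 \<le> y" using lb d_nonneg[of x "SB p"] by force
qed

lemma mcs_le:
  assumes lb: "\<forall>p\<in>M0. u p \<ge> -1" and p: "p \<in> M0"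
  shows "mcs dB SB u x \<le> u p + dB x (SB p)"
  unfolding mcs_def by (rule cINF_lower[OF mcs_bdd[OF lb] p])

lemma mcs_ge:
  assumes "\<And>p. p \<in> M0 \<Longrightarrow> c \<le> u p + dB x (SB p)"
  shows "c \<le> mcs dB SB u x"
  unfolding mcs_def by (rule cINF_greatest) (use zero_M0 assms in auto)

lemma mcs_lip1:
  assumes lb: "\<forall>p\<in>M0. u p \<ge> -1" and x: "x \<in> B" and y: "y \<in> B"
  shows "mcs dB SB u x - mcs dB SB u y \<le> dB x y"
proof -
  have "mcs dB SB u x - dB x y \<le> mcs dB SB u y"
  proof (rule mcs_ge)
    fix p assume p: "p \<in> M0"
    have "mcs dB SB u x \<le> u p + dB x (SB p)" by (rule mcs_le[OF lb p])
    moreover have "dB x (SB p) \<le> dB x y + dB y (SB p)" by (rule d_tri[OF x y SB_B[OF p]])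
    ultimately show "mcs dB SB u x - dB x y \<le> u p + dB y (SB p)" by linarith
  qed
  then show ?thesis by linarith
qed

lemma mcs_lip:
  assumes lb: "\<forall>p\<in>M0. u p \<ge> -1" and x: "x \<in> B" and y: "y \<in> B"
  shows "\<bar>mcs dB SB u x - mcs dB SB u y\<bar> \<le> dB x y"
  using mcs_lip1[OF lb x y] mcs_lip1[OF lb y x] d_commute[of x y] by linarith

lemma mcs_fix:
  assumes lb: "\<forall>p\<in>M0. u p \<ge> -1" and lip: "\<forall>p\<in>M0. \<forall>q\<in>M0. u q - u p \<le> taxicab q p"
    and q: "q \<in> M0"
  shows "mcs dB SB u (SB q) = u q"
proof (rule antisym)
  show "mcs dB SB u (SB q) \<le> u q" using mcs_le[OF lb q, of "SB q"] d_self[OF SB_B[OF q]] by simp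
  show "u q \<le> mcs dB SB u (SB q)"
  proof (rule mcs_ge)
    fix p assume p: "p \<in> M0"
    have "u q - u p \<le> taxicab q p" using lip p q by blast
    also have "\<dots> \<le> dB (SB q) (SB p)" by (rule sq2[OF q p])
    finally show "u q \<le> u p + dB (SB q) (SB p)" by linarith
  qed
qed

lemma uu_lb: "\<forall>p\<in>M0. uu p \<ge> -1" using M0_U unfolding uu_def by (auto simp: mem_Times_iff)
lemma vv_lb: "\<forall>p\<in>M0. vv p \<ge> -1" using M0_U unfolding vv_def by (auto simp: mem_Times_iff)
lemma uu_lip: "\<forall>p\<in>M0. \<forall>q\<in>M0. uu q - uu p \<le> taxicab q p" unfolding uu_def taxicab_def by (auto simp: abs_if)
lemma vv_lip: "\<forall>p\<in>M0. \<forall>q\<in>M0. vv q - vv p \<le> taxicab q p" unfolding vv_def taxicab_def by (auto simp: abs_if)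

definition g0 :: "'b \<Rightarrow> real \<times> real" where
  "g0 x = (clamp ((mcs dB SB uu x + mcs dB SB vv x) / 2), clamp ((mcs dB SB uu x - mcs dB SB vv x) / 2))"

lemma g0_good: "good g0"
proof -
  have U: "\<forall>x\<in>B. g0 x \<in> U" unfolding g0_def using clamp_range by (simp add: mem_Times_iff)
  have fixp: "g0 (SB p) = p" if p: "p \<in> M0" for p
  proof -
    have "mcs dB SB uu (SB p) = uu p" by (rule mcs_fix[OF uu_lb uu_lip p])
    then have 1: "mcs dB SB uu (SB p) = fst p + snd p" by (simp only: uu_def)
    have "mcs dB SB vv (SB p) = vv p" by (rule mcs_fix[OF vv_lb vv_lip p])
    then have 2: "mcs dB SB vv (SB p) = fst p - snd p" by (simp only: vv_def)
    have "fst p \<in> {0..1}" "snd p \<in> {0..1}" using p M0_U by (auto simp: mem_Times_iff)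
    then show ?thesis unfolding g0_def 1 2 by (simp add: clamp_id)
  qed
  have short: "taxicab (g0 x) (g0 y) \<le> dB x y" if x: "x \<in> B" and y: "y \<in> B" for x y
  proof -
    define a where "a = mcs dB SB uu x - mcs dB SB uu y"
    define b where "b = mcs dB SB vv x - mcs dB SB vv y"
    have a: "\<bar>a\<bar> \<le> dB x y" unfolding a_def by (rule mcs_lip[OF uu_lb x y])
    have b: "\<bar>b\<bar> \<le> dB x y" unfolding b_def by (rule mcs_lip[OF vv_lb x y])
    have "taxicab (g0 x) (g0 y) \<le>
      \<bar>(mcs dB SB uu x + mcs dB SB vv x) / 2 - (mcs dB SB uu y + mcs dB SB vv y) / 2\<bar> +
      \<bar>(mcs dB SB uu x - mcs dB SB vv x) / 2 - (mcs dB SB uu y - mcs dB SB vv y) / 2\<bar>"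
      unfolding taxicab_def g0_def fst_conv snd_conv by (intro add_mono clamp_lip)
    also have "\<dots> = \<bar>(a + b) / 2\<bar> + \<bar>(a - b) / 2\<bar>"
    proof -
      have e1: "(mcs dB SB uu x + mcs dB SB vv x) / 2 - (mcs dB SB uu y + mcs dB SB vv y) / 2 = (a + b) / 2"
        unfolding a_def b_def by (simp add: field_simps)
      have e2: "(mcs dB SB uu x - mcs dB SB vv x) / 2 - (mcs dB SB uu y - mcs dB SB vv y) / 2 = (a - b) / 2"
        unfolding a_def b_def by (simp add: field_simps)
      show ?thesis by (simp only: e1 e2)
    qed
    also have "\<dots> \<le> dB x y" by (rule half_bound[OF a b])
    finally show ?thesis .
  qed
  show ?thesis unfolding good_def using U fixp short by auto
qed

primrec itr :: "nat \<Rightarrow> 'b \<Rightarrow> real \<times> real" where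
  "itr 0 = g0"
| "itr (Suc n) = Tm (itr n)"

lemma itr_good: "good (itr n)"
  by (induction n) (auto simp: g0_good Tm_good)

lemma itr_U: "x \<in> B \<Longrightarrow> itr n x \<in> U" using itr_good[of n] unfolding good_def by auto

lemma itr_Suc_eq: "itr (Suc n) x = cv (fst (pick x)) (itr n (snd (pick x)))"
  by (simp add: Tm_def)

lemma itr_diff: "x \<in> B \<Longrightarrow> taxicab (itr (Suc n) x) (itr n x) \<le> 2 / 3^n"
proof (induction n arbitrary: x)
  case 0
  then show ?case using taxicab_U[OF itr_U[OF 0, of "Suc 0"] itr_U[OF 0, of 0]] by simp
next
  case (Suc n)
  have y: "snd (pick x) \<in> B" using pick[OF Suc.prems] by auto
  have "taxicab (itr (Suc (Suc n)) x) (itr (Suc n) x) = taxicab (itr (Suc n) (snd (pick x))) (itr n (snd (pick x))) / 3"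
    by (simp only: itr_Suc_eq[of "Suc n"] itr_Suc_eq[of n] taxicab_cv)
  also have "\<dots> \<le> (2 / 3^n) / 3" using Suc.IH[OF y] by simp
  finally show ?case by simp
qed

definition glim :: "'b \<Rightarrow> real \<times> real" where "glim x = lim (\<lambda>n. itr n x)"

lemma itr_conv: assumes x: "x \<in> B" shows "(\<lambda>n. itr n x) \<longlonglongrightarrow> glim x"
proof -
  define f where "f k = itr (Suc k) x - itr k x" for k
  have sg: "summable (\<lambda>k. 2 * (1/3::real)^k)" by (intro summable_mult summable_geometric) simp
  have nb: "norm (f k) \<le> 2 * (1/3)^k" for k
  proof -
    have "norm (f k) = dist (itr (Suc k) x) (itr k x)" by (simp add: f_def dist_norm)
    also have "\<dots> \<le> taxicab (itr (Suc k) x) (itr k x)" by (rule dist_le_taxicab)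
    also have "\<dots> \<le> 2 / 3^k" by (rule itr_diff[OF x])
    also have "\<dots> = 2 * (1/3)^k" by (simp add: power_one_over)
    finally show ?thesis .
  qed
  have "summable f" by (rule summable_comparison_test'[OF sg]) (rule nb)
  then have "(\<lambda>n. \<Sum>k<n. f k) \<longlonglongrightarrow> suminf f" by (rule summable_LIMSEQ)
  moreover have "(\<Sum>k<n. f k) = itr n x - itr 0 x" for n
    unfolding f_def by (rule sum_lessThan_telescope)
  ultimately have "(\<lambda>n. itr n x - itr 0 x) \<longlonglongrightarrow> suminf f" by simp
  then have "(\<lambda>n. (itr n x - itr 0 x) + itr 0 x) \<longlonglongrightarrow> suminf f + itr 0 x"
    by (intro tendsto_add tendsto_const)
  then have "convergent (\<lambda>n. itr n x)" unfolding convergent_def by (simp only: diff_add_cancel) (rule exI)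
  then show ?thesis unfolding glim_def by (simp add: convergent_LIMSEQ_iff)
qed

lemma itr_near: "x \<in> B \<Longrightarrow> \<exists>k\<in>carpet. taxicab (itr n x) k \<le> 2 / 3^n"
proof (induction n arbitrary: x)
  case 0
  obtain k where "k \<in> carpet" using carpet_ne by auto
  moreover have "k \<in> U" using \<open>k \<in> carpet\<close> carpet_U by blast
  show ?case
  proof (rule bexI[OF _ \<open>k \<in> carpet\<close>])
    show "taxicab (itr 0 x) k \<le> 2 / 3^0" using taxicab_U[OF itr_U[OF 0, of 0] \<open>k \<in> U\<close>] by simp
  qed
next
  case (Suc n)
  have m: "fst (pick x) \<in> Mset" and y: "snd (pick x) \<in> B" using pick[OF Suc.prems] by auto
  obtain k1 where k1: "k1 \<in> carpet" "taxicab (itr n (snd (pick x))) k1 \<le> 2 / 3^n" using Suc.IH[OF y] by blast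
  have "cv (fst (pick x)) k1 \<in> carpet" by (rule cv_carpet[OF m k1(1)])
  moreover have "taxicab (itr (Suc n) x) (cv (fst (pick x)) k1) \<le> 2 / 3^Suc n"
    unfolding itr_Suc_eq taxicab_cv using k1(2) by simp
  ultimately show ?case by blast
qed

lemma glim_carpet: assumes x: "x \<in> B" shows "glim x \<in> carpet"
proof -
  have "glim x \<in> closure carpet"
    unfolding closure_approachable
  proof (intro allI impI)
    fix e :: real assume e: "e > 0"
    obtain N1 where N1: "\<forall>n\<ge>N1. dist (itr n x) (glim x) < e/2"
    proof -
      have "\<forall>r>0. \<exists>N. \<forall>n\<ge>N. dist (itr n x) (glim x) < r"
        using itr_conv[OF x] by (simp only: lim_sequentially)
      moreover have "e/2 > 0" using e by simp
      ultimately show ?thesis using that by blast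
    qed
    obtain N2 where N2: "2 / 3^N2 < e/2" using small_pow[of "e/2"] e by auto
    define n where "n = N1 + N2"
    have "(3::real)^N2 \<le> 3^n" unfolding n_def by (rule power_increasing) auto
    then have "2 / 3^n \<le> (2::real) / 3^N2" by (intro divide_left_mono) auto
    obtain k where k: "k \<in> carpet" "taxicab (itr n x) k \<le> 2 / 3^n" using itr_near[OF x] by blast
    have "dist k (glim x) \<le> dist k (itr n x) + dist (itr n x) (glim x)" by (rule dist_triangle)
    moreover have "dist k (itr n x) \<le> taxicab (itr n x) k"
      using dist_le_taxicab[of "itr n x" k] by (simp add: dist_commute)
    moreover have "dist (itr n x) (glim x) < e/2" using N1 unfolding n_def by simp
    ultimately have "dist k (glim x) < e" using k N2 \<open>2 / 3^n \<le> 2 / 3^N2\<close> by linarith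
    then show "\<exists>y\<in>carpet. dist y (glim x) < e" using k by blast
  qed
  then show ?thesis using carpet_compact by (simp add: compact_imp_closed)
qed

lemma glim_fix: assumes p: "p \<in> M0" shows "glim (SB p) = p"
proof -
  have "itr n (SB p) = p" for n using itr_good[of n] p unfolding good_def by auto
  then have "(\<lambda>n. itr n (SB p)) \<longlonglongrightarrow> p" by simp
  then show ?thesis using itr_conv[OF SB_B[OF p]] LIMSEQ_unique by blast
qed

lemma glim_short: assumes x: "x \<in> B" and y: "y \<in> B" shows "taxicab (glim x) (glim y) \<le> dB x y"
proof -
  have "(\<lambda>n. taxicab (itr n x) (itr n y)) \<longlonglongrightarrow> taxicab (glim x) (glim y)"
    unfolding taxicab_def by (intro tendsto_intros itr_conv x y)
  moreover have "\<forall>n. taxicab (itr n x) (itr n y) \<le> dB x y" using itr_good x y unfolding good_def by blast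
  ultimately show ?thesis using LIMSEQ_le_const2 by blast
qed

lemma glim_eq: assumes x: "x \<in> B" shows "glim x = Tm glim x"
proof -
  have y: "snd (pick x) \<in> B" using pick[OF x] by auto
  have "(\<lambda>n. itr (Suc n) x) \<longlonglongrightarrow> glim x" using LIMSEQ_Suc[OF itr_conv[OF x]] .
  moreover have "(\<lambda>n. itr (Suc n) x) \<longlonglongrightarrow> Tm glim x"
    unfolding itr_Suc_eq Tm_def cv_def by (intro tendsto_intros itr_conv[OF y]) simp_all
  ultimately show ?thesis by (rule LIMSEQ_unique)
qed

lemma uniq:
  assumes h: "\<forall>x\<in>B. h x \<in> U" "\<forall>x\<in>B. h x = Tm h x"
    and g: "\<forall>x\<in>B. g x \<in> U" "\<forall>x\<in>B. g x = Tm g x"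
    and x: "x \<in> B"
  shows "h x = g x"
proof -
  have bnd: "\<forall>x\<in>B. taxicab (h x) (g x) \<le> 2 / 3^n" for n
  proof (induction n)
    case 0 then show ?case using h g taxicab_U by simp
  next
    case (Suc n)
    show ?case
    proof
      fix x assume x: "x \<in> B"
      have y: "snd (pick x) \<in> B" using pick[OF x] by auto
      have "taxicab (h x) (g x) = taxicab (Tm h x) (Tm g x)" using h g x by simp
      also have "\<dots> = taxicab (h (snd (pick x))) (g (snd (pick x))) / 3" unfolding Tm_def taxicab_cv ..
      also have "\<dots> \<le> (2 / 3^n) / 3" using Suc y by simp
      finally show "taxicab (h x) (g x) \<le> 2 / 3^Suc n" by simp
    qed
  qed
  have "taxicab (h x) (g x) \<le> 0"
  proof (rule ccontr)
    assume "\<not> taxicab (h x) (g x) \<le> 0"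
    then obtain n where "2 / 3^n < taxicab (h x) (g x)" using small_pow by force
    moreover have "taxicab (h x) (g x) \<le> 2 / 3^n" using bnd[of n] x by blast
    ultimately show False by linarith
  qed
  then show ?thesis by (rule taxicab_zero)
qed

end

theorem mainTheorem4:
  fixes B :: "'b set" and dB :: "'b \<Rightarrow> 'b \<Rightarrow> real" and SB :: "real \<times> real \<Rightarrow> 'b"
    and \<beta> :: "'b \<Rightarrow> ((nat \<times> nat) \<times> 'b) set"
  assumes "square_ms B dB SB"
    and "squams_morphism B dB SB (tensor_carrier B SB) (tensor_dist B dB SB) (tensor_S B SB) \<beta>"
  shows "\<exists>g. squams_morphism B dB SB carpet taxicab carpet_S g \<and>
             (\<forall>x\<in>B. g x = tau (tensor_map carpet carpet_S g (\<beta> x))) \<and>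
             (\<forall>h. squams_morphism B dB SB carpet taxicab carpet_S h \<and>
                  (\<forall>x\<in>B. h x = tau (tensor_map carpet carpet_S h (\<beta> x)))
                  \<longrightarrow> (\<forall>x\<in>B. h x = g x))"
proof -
  interpret S: setting B dB SB \<beta> by (rule setting.intro) (fact assms)+
  have gc: "\<forall>x\<in>B. S.glim x \<in> carpet" using S.glim_carpet by blast
  have mor: "squams_morphism B dB SB carpet taxicab carpet_S S.glim"
    unfolding squams_morphism_def carpet_S_def using gc S.glim_short S.glim_fix by auto
  have eq: "\<forall>x\<in>B. S.glim x = tau (tensor_map carpet carpet_S S.glim (\<beta> x))"
    using S.tau_Tm[OF _ gc] S.glim_eq by simp
  have un: "\<forall>x\<in>B. h x = S.glim x"
    if hm: "squams_morphism B dB SB carpet taxicab carpet_S h"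
      and he: "\<forall>x\<in>B. h x = tau (tensor_map carpet carpet_S h (\<beta> x))" for h
  proof -
    have hc: "\<forall>x\<in>B. h x \<in> carpet" using hm unfolding squams_morphism_def by auto
    have hU: "\<forall>x\<in>B. h x \<in> U" using hc carpet_U by auto
    have hT: "\<forall>x\<in>B. h x = S.Tm h x" using he S.tau_Tm[OF _ hc] by simp
    have gU: "\<forall>x\<in>B. S.glim x \<in> U" using gc carpet_U by auto
    have gT: "\<forall>x\<in>B. S.glim x = S.Tm S.glim x" using S.glim_eq by simp
    show ?thesis using S.uniq[OF hU hT gU gT] by blast
  qed
  show ?thesis using mor eq un by blast
qed

end
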